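(* Assume the Margin assumption and Boundedness. For agents $A_0,\dots,A_T\in\mathcal{A}$, let $(y_t,b_t)$ be generated by the projected strategic perceptron with $\mathbb{L}=\mathbb{R}^d\times\mathbb{R}$ and $\gamma=1$, and let $\mathcal{M}_T$ be its set of mistake times. Then $$\sum_{t\in\mathcal{M}_T}L_{\mathrm{hinge}}\Big(\big(\tfrac{y_*}{d_*\|y_*\|_*},\tfrac{b_*}{d_*\|y_*\|_*}\big);(s(A_t,y_t,b_t),1),\ell(A_t)\Big)\le\frac{2}{cd_*}|\mathcal{M}_T|,$$ and consequently $$|\mathcal{M}_T|\le\frac{\|y_*\|_2^2+b_*^2}{\|y_*\|_*^2}\cdot\frac{\widetilde D^2+1}{\max\{0,d_*-2/c\}^2}$$ (in particular $|\mathcal{M}_T|$ is bounded independently of $T$ when $d_*>2/c$).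
   Context: Setting: $\mathcal{A}\subseteq\mathbb{R}^d$, labels $\ell(A)\in\{\pm1\}$; $\operatorname{sign}(0)=+1$; norm $\|\cdot\|$ with dual $\|y\|_*=\max_{\|w\|\le1}y^\top w$; constant $c>0$; a fixed selection $v$ with $v(0)=0$ and $v(y)\in\arg\max_{\|w\|\le1}y^\top w$ for $y\ne0$, with $v(\lambda y)=v(y)$ for $\lambda>0$. Predicted label $\hat\ell(x,y,b)=\operatorname{sign}(y^\top x+b-2\|y\|_*/c)$. Response: for $y\ne0$, $r(A,y,b)=A+(\tfrac2c-\tfrac{y^\top A+b}{\|y\|_*})v(y)$ if $0\le\tfrac{y^\top A+b}{\|y\|_*}<\tfrac2c$, else $A$. Proxy: for $y\ne0$, $s(A,y,b)=A-\tfrac{y^\top A+b}{\|y\|_*}v(y)$ if $0\le\tfrac{y^\top A+b}{\|y\|_*}<\tfrac2c$ and $\ell(A)=-1$; $=A+(\tfrac2c-\tfrac{y^\top A+b}{\|y\|_*})v(y)$ if the range condition holds and $\ell(A)=+1$; $=A$ otherwise; $r(A,0,b)=s(A,0,b)=A$. Margin assumption: $d_*:=\max_{y\ne0,b}\min_{A\in\mathcal{A}}\ell(A)\frac{y^\top A+b}{\|y\|_*}$ attained at $(y_*,b_* )$, $y_*\ne0$, $d_*>0$. Boundedness: $D:=\sup_{A\in\mathcal{A}}\|A\|_2<\infty$; $C_{\|\cdot\|}=\max_y\|v(y)\|_2$; $\widetilde D=D+\tfrac2cC_{\|\cdot\|}$. Hinge loss $L_{\mathrm{hinge}}(q;\xi,\ell)=\max\{0,1-\ell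 q^\top\xi\}$. Projected strategic perceptron with closed convex cone $\mathbb{L}$ and stepsize $\gamma$: $q_0=(y_0,b_0)=(0,0)$; for $t=0,\dots,T$: agent $A_t$ is shown $(y_t,b_t)$, responds $r(A_t,y_t,b_t)$, is predicted $\hat\ell(r(A_t,y_t,b_t),y_t,b_t)$; with $\xi_t=(s(A_t,y_t,b_t),1)$, $z_{t+1}=q_t+\gamma\ell(A_t)\xi_t$ on a mistake, else $z_{t+1}=q_t$; $q_{t+1}=(y_{t+1},b_{t+1})=\Pi_{\mathbb{L}}(z_{t+1})$. Mistake set $\mathcal{M}_T=\{t\in\{0,\dots,T\}:\hat\ell(r(A_t,y_t,b_t),y_t,b_t)\ne\ell(A_t)\}$. *)

theory Defs
  imports "HOL-Analysis.Analysis"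
begin

text \<open>An abstract norm on a Euclidean space (the paper's norm, distinct from the 2-norm).\<close>
definition is_norm :: "('a::euclidean_space \<Rightarrow> real) \<Rightarrow> bool" where
  "is_norm N \<longleftrightarrow> (\<forall>x. 0 \<le> N x) \<and> (\<forall>x. N x = 0 \<longleftrightarrow> x = 0)
     \<and> (\<forall>a x. N (a *\<^sub>R x) = \<bar>a\<bar> * N x) \<and> (\<forall>x y. N (x + y) \<le> N x + N y)"

definition dual_norm :: "('a::euclidean_space \<Rightarrow> real) \<Rightarrow> 'a \<Rightarrow> real" where
  "dual_norm N y = Sup {y \<bullet> w | w. N w \<le> 1}"

definition is_selection :: "('a::euclidean_space \<Rightarrow> real) \<Rightarrow> ('a \<Rightarrow> 'a) \<Rightarrow> bool" where
  "is_selection N v \<longleftrightarrow> v 0 = 0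
     \<and> (\<forall>y. y \<noteq> 0 \<longrightarrow> N (v y) \<le> 1 \<and> y \<bullet> v y = dual_norm N y)
     \<and> (\<forall>y k. 0 < k \<longrightarrow> v (k *\<^sub>R y) = v y)"

definition sgn1 :: "real \<Rightarrow> real" where
  "sgn1 x = (if 0 \<le> x then 1 else -1)"

definition pred_label :: "('a::euclidean_space \<Rightarrow> real) \<Rightarrow> real \<Rightarrow> 'a \<Rightarrow> 'a \<Rightarrow> real \<Rightarrow> real" where
  "pred_label N c x y b = sgn1 (y \<bullet> x + b - 2 * dual_norm N y / c)"

definition response :: "('a::euclidean_space \<Rightarrow> real) \<Rightarrow> ('a \<Rightarrow> 'a) \<Rightarrow> real \<Rightarrow> 'a \<Rightarrow> 'a \<Rightarrow> real \<Rightarrow> 'a" where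
  "response N v c A y b =
     (if y = 0 then A else
      (let m = (y \<bullet> A + b) / dual_norm N y in
       if 0 \<le> m \<and> m < 2 / c then A + (2 / c - m) *\<^sub>R v y else A))"

definition proxy :: "('a::euclidean_space \<Rightarrow> real) \<Rightarrow> ('a \<Rightarrow> 'a) \<Rightarrow> real \<Rightarrow> ('a \<Rightarrow> real) \<Rightarrow> 'a \<Rightarrow> 'a \<Rightarrow> real \<Rightarrow> 'a" where
  "proxy N v c lab A y b =
     (if y = 0 then A else
      (let m = (y \<bullet> A + b) / dual_norm N y in
       if 0 \<le> m \<and> m < 2 / c then
         (if lab A = -1 then A - m *\<^sub>R v y
          else if lab A = 1 then A + (2 / c - m) *\<^sub>R v y else A)
       else A))"

primrec perceptron :: "('a::euclidean_space \<Rightarrow> real) \<Rightarrow> ('a \<Rightarrow> 'a) \<Rightarrow> real \<Rightarrow> ('a \<Rightarrow> real)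
    \<Rightarrow> ('a \<times> real) set \<Rightarrow> real \<Rightarrow> (nat \<Rightarrow> 'a) \<Rightarrow> nat \<Rightarrow> 'a \<times> real" where
  "perceptron N v c lab L \<gamma> Ag 0 = (0, 0)"
| "perceptron N v c lab L \<gamma> Ag (Suc t) =
     (let q = perceptron N v c lab L \<gamma> Ag t; y = fst q; b = snd q;
          z = (if pred_label N c (response N v c (Ag t) y b) y b \<noteq> lab (Ag t)
               then q + \<gamma> *\<^sub>R (lab (Ag t) *\<^sub>R (proxy N v c lab (Ag t) y b, 1))
               else q)
      in closest_point L z)"

definition mistakes :: "('a::euclidean_space \<Rightarrow> real) \<Rightarrow> ('a \<Rightarrow> 'a) \<Rightarrow> real \<Rightarrow> ('a \<Rightarrow> real)
    \<Rightarrow> ('a \<times> real) set \<Rightarrow> real \<Rightarrow> (nat \<Rightarrow> 'a) \<Rightarrow> nat \<Rightarrow> nat set" where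
  "mistakes N v c lab L \<gamma> Ag T =
     {t \<in> {0..T}. let q = perceptron N v c lab L \<gamma> Ag t in
        pred_label N c (response N v c (Ag t) (fst q) (snd q)) (fst q) (snd q) \<noteq> lab (Ag t)}"

definition hinge :: "('a::euclidean_space \<times> real) \<Rightarrow> ('a \<times> real) \<Rightarrow> real \<Rightarrow> real" where
  "hinge q \<xi> l = max 0 (1 - l * (q \<bullet> \<xi>))"

definition margin :: "('a::euclidean_space \<Rightarrow> real) \<Rightarrow> 'a set \<Rightarrow> ('a \<Rightarrow> real) \<Rightarrow> 'a \<Rightarrow> real \<Rightarrow> real" where
  "margin N \<A> lab y b = Inf {lab A * (y \<bullet> A + b) / dual_norm N y | A. A \<in> \<A>}"

end

theory Submission
  imports Defs
begin

lemma norm_props: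
  assumes "is_norm N"
  shows "N 0 = 0" "N (-x) = N x" "N (a *\<^sub>R x) = \<bar>a\<bar> * N x" "N (x+y) \<le> N x + N y" "0 \<le> N x"
    "N x = 0 \<longleftrightarrow> x = 0"
  using assms unfolding is_norm_def
  by (auto, metis abs_minus_cancel abs_one mult_1 scaleR_minus1_left)

lemma norm_equiv:
  fixes N :: "'a::euclidean_space \<Rightarrow> real"
  assumes n: "is_norm N"
  shows "\<exists>K>0. \<forall>w. norm w \<le> K * N w"
proof -
  have cv: "convex_on UNIV N"
  proof (rule convex_onI)
    fix t :: real and x y :: 'a assume t: "t > 0" "t < 1"
    have "N ((1 - t) *\<^sub>R x + t *\<^sub>R y) \<le> N ((1 - t) *\<^sub>R x) + N (t *\<^sub>R y)"
      using norm_props[OF n] by blast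
    also have "\<dots> = (1 - t) * N x + t * N y" using t norm_props(3)[OF n] by simp
    finally show "N ((1 - t) *\<^sub>R x + t *\<^sub>R y) \<le> (1 - t) * N x + t * N y" .
  qed simp
  have "continuous_on UNIV N" by (rule convex_on_continuous[OF _ cv]) simp
  hence co: "continuous_on (sphere 0 1) N" by (rule continuous_on_subset) simp
  obtain i :: 'a where i: "i \<in> Basis" using nonempty_Basis by blast
  have ne: "sphere (0::'a) 1 \<noteq> {}" using i by (auto simp: sphere_def intro!: exI[of _ i])
  obtain x0 where x0: "x0 \<in> sphere 0 1" "\<And>y. y \<in> sphere 0 1 \<Longrightarrow> N x0 \<le> N y"
    using continuous_attains_inf[OF compact_sphere ne co] by blast
  have x0nz: "x0 \<noteq> 0" using x0(1) by auto
  define m where "m = N x0"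
  have mpos: "m > 0" unfolding m_def using norm_props(5)[OF n, of x0] norm_props(6)[OF n, of x0] x0nz by (metis order_le_less)
  have "norm w \<le> (1/m) * N w" for w
  proof (cases "w = 0")
    case True thus ?thesis using norm_props(1)[OF n] by simp
  next
    case False
    have "(1/norm w) *\<^sub>R w \<in> sphere 0 1" using False by simp
    hence "m \<le> N ((1/norm w) *\<^sub>R w)" using x0(2) m_def by blast
    also have "\<dots> = N w / norm w" using norm_props(3)[OF n] by simp
    finally have "m * norm w \<le> N w" using False by (simp add: field_simps)
    thus ?thesis using mpos by (simp add: field_simps)
  qed
  thus ?thesis using mpos by (intro exI[of _ "1/m"]) auto
qed


lemma dual_bdd:
  fixes N :: "'a::euclidean_space \<Rightarrow> real"
  assumes n: "is_norm N"
  shows "bdd_above {y \<bullet> w | w. N w \<le> 1}"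
proof -
  obtain K where K: "K > 0" "\<And>w. norm w \<le> K * N w" using norm_equiv[OF n] by blast
  have "y \<bullet> w \<le> norm y * K" if "N w \<le> 1" for w
  proof -
    have "y \<bullet> w \<le> norm y * norm w" by (rule norm_cauchy_schwarz)
    also have "K * N w \<le> K" using that K(1) mult_left_mono[of "N w" 1 K] by simp
    hence "norm w \<le> K" using K(2)[of w] by linarith
    hence "norm y * norm w \<le> norm y * K" by (simp add: mult_left_mono)
    finally show ?thesis .
  qed
  thus ?thesis by (auto simp: bdd_above_def)
qed

lemma dual_ge:
  fixes N :: "'a::euclidean_space \<Rightarrow> real"
  assumes n: "is_norm N" and "N w \<le> 1"
  shows "y \<bullet> w \<le> dual_norm N y"
  unfolding dual_norm_def using assms by (intro cSup_upper[OF _ dual_bdd[OF n]]) auto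

lemma dual_abs:
  fixes N :: "'a::euclidean_space \<Rightarrow> real"
  assumes n: "is_norm N" and "N w \<le> 1"
  shows "\<bar>y \<bullet> w\<bar> \<le> dual_norm N y"
proof -
  have "y \<bullet> (-w) \<le> dual_norm N y" using assms norm_props(2)[OF n, of w] by (intro dual_ge) auto
  thus ?thesis using dual_ge[OF assms, of y] by (simp add: abs_le_iff)
qed

lemma dual_pos:
  fixes N :: "'a::euclidean_space \<Rightarrow> real"
  assumes n: "is_norm N" and y: "y \<noteq> 0"
  shows "0 < dual_norm N y"
proof -
  have Np: "N y > 0" using norm_props(5,6)[OF n, of y] y by (metis less_le)
  have "N ((1 / N y) *\<^sub>R y) = 1" using norm_props(3)[OF n] Np by simp
  hence "y \<bullet> ((1 / N y) *\<^sub>R y) \<le> dual_norm N y" by (intro dual_ge[OF n]) auto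
  moreover have "y \<bullet> ((1 / N y) *\<^sub>R y) > 0" using Np y by simp
  ultimately show ?thesis by linarith
qed

lemma dual_zero:
  fixes N :: "'a::euclidean_space \<Rightarrow> real"
  assumes n: "is_norm N" shows "dual_norm N 0 = 0"
proof -
  have "{(0::'a::euclidean_space) \<bullet> w | w. N w \<le> 1} = {0}"
  proof -
    have "N 0 \<le> 1" using norm_props(1)[OF n] by simp
    thus ?thesis by auto
  qed
  thus ?thesis unfolding dual_norm_def by simp
qed

lemma sel_bound:
  fixes N :: "'a::euclidean_space \<Rightarrow> real"
  assumes n: "is_norm N" and sel: "is_selection N v"
  shows "bdd_above (range (\<lambda>y. norm (v y)))"
proof -
  obtain K where K: "K > 0" "\<And>w. norm w \<le> K * N w" using norm_equiv[OF n] by blast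
  have "norm (v y) \<le> K" for y
  proof (cases "y = 0")
    case True thus ?thesis using sel K by (simp add: is_selection_def)
  next
    case False
    hence "N (v y) \<le> 1" using sel by (simp add: is_selection_def)
    hence "K * N (v y) \<le> K" using K(1) mult_left_mono[of "N (v y)" 1 K] by simp
    thus ?thesis using K(2)[of "v y"] by linarith
  qed
  thus ?thesis by (auto simp: bdd_above_def)
qed

lemma sel_dot:
  fixes N :: "'a::euclidean_space \<Rightarrow> real"
  assumes n: "is_norm N" and sel: "is_selection N v"
  shows "\<bar>z \<bullet> v y\<bar> \<le> dual_norm N z"
proof (cases "y = 0")
  case True thus ?thesis using sel dual_abs[OF n, of 0 z] norm_props(1)[OF n] by (simp add: is_selection_def)
next
  case False thus ?thesis using sel by (intro dual_abs[OF n]) (simp add: is_selection_def)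
qed

lemma proxy_form:
  fixes N :: "'a::euclidean_space \<Rightarrow> real"
  assumes c: "0 < c"
  shows "\<exists>\<beta>. \<bar>\<beta>\<bar> \<le> 2 / c \<and> proxy N v c lab A y b = A + \<beta> *\<^sub>R v y"
proof -
  define m where "m = (y \<bullet> A + b) / dual_norm N y"
  show ?thesis
  proof (cases "y \<noteq> 0 \<and> 0 \<le> m \<and> m < 2 / c")
    case True
    show ?thesis
    proof (cases "lab A = -1")
      case True
      thus ?thesis using \<open>y \<noteq> 0 \<and> 0 \<le> m \<and> m < 2 / c\<close>
        by (intro exI[of _ "-m"]) (auto simp: proxy_def m_def[symmetric] Let_def)
    next
      case False
      thus ?thesis using \<open>y \<noteq> 0 \<and> 0 \<le> m \<and> m < 2 / c\<close> c
        by (intro exI[of _ "if lab A = 1 then 2/c - m else 0"]) (auto simp: proxy_def m_def[symmetric] Let_def)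
    qed
  next
    case False
    thus ?thesis using c by (intro exI[of _ 0]) (auto simp: proxy_def m_def[symmetric] Let_def)
  qed
qed

lemma mistake_step:
  fixes N :: "'a::euclidean_space \<Rightarrow> real"
  assumes n: "is_norm N" and sel: "is_selection N v" and c: "0 < c"
    and l: "lab A = 1 \<or> lab A = -1"
    and mis: "pred_label N c (response N v c A y b) y b \<noteq> lab A"
  shows "lab A * (y \<bullet> proxy N v c lab A y b + b) \<le> 0"
proof (cases "y = 0")
  case True
  thus ?thesis using mis l by (auto simp: pred_label_def response_def proxy_def dual_zero[OF n] sgn1_def split: if_splits)
next
  case False
  define D where "D = dual_norm N y"
  have Dp: "D > 0" using dual_pos[OF n False] D_def by simp
  have yv: "y \<bullet> v y = D" using sel False D_def by (simp add: is_selection_def)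
  define m where "m = (y \<bullet> A + b) / D"
  have yA: "y \<bullet> A + b = m * D" using Dp m_def by simp
  show ?thesis
  proof (cases "0 \<le> m \<and> m < 2 / c")
    case True
    have "y \<bullet> response N v c A y b + b - 2 * D / c = 0"
      using True False yv yA by (simp add: response_def D_def[symmetric] m_def[symmetric] algebra_simps inner_diff_right)
    hence "lab A = -1" using mis l unfolding pred_label_def D_def sgn1_def by auto
    moreover have "y \<bullet> proxy N v c lab A y b + b = 0" using True False yv yA \<open>lab A = -1\<close>
      by (simp add: proxy_def D_def[symmetric] m_def[symmetric] algebra_simps inner_diff_right)
    ultimately show ?thesis by simp
  next
    case nr: False
    have r: "response N v c A y b = A" and p: "proxy N v c lab A y b = A"
      using nr False by (auto simp: response_def proxy_def D_def[symmetric] m_def[symmetric] Let_def)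
    show ?thesis
    proof (cases "m < 0")
      case True
      have "m * D < 0" using True Dp mult_neg_pos by blast
      moreover have "2 * D / c > 0" using Dp c by simp
      ultimately have "m * D - 2 * D / c < 0" by linarith
      hence "lab A = 1" using mis l r yA unfolding pred_label_def D_def sgn1_def by auto
      thus ?thesis using p yA True Dp mult_neg_pos[of m D] by simp
    next
      case False
      hence m2: "m \<ge> 2 / c" using nr by auto
      have "2 / c * D \<le> m * D" using mult_right_mono[OF m2, of D] Dp by simp
      hence "m * D - 2 * D / c \<ge> 0" by simp
      hence "lab A = -1" using mis l r yA unfolding pred_label_def D_def sgn1_def by auto
      moreover have "2 / c > 0" using c by simp
      hence "m > 0" using m2 by linarith
      ultimately show ?thesis using p yA Dp mult_pos_pos[of m D] by simp
    qed
  qed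
qed


lemma margin_lower:
  fixes N :: "'a::euclidean_space \<Rightarrow> real"
  assumes "bounded \<A>" and lab: "\<forall>A\<in>\<A>. lab A = 1 \<or> lab A = -1" and A: "A \<in> \<A>"
  shows "margin N \<A> lab y b \<le> lab A * (y \<bullet> A + b) / dual_norm N y"
proof -
  obtain B where B: "\<And>x. x \<in> \<A> \<Longrightarrow> norm x \<le> B" using assms(1) by (auto simp: bounded_iff)
  define K where "K = (norm y * B + \<bar>b\<bar>) / \<bar>dual_norm N y\<bar>"
  have "lab x * (y \<bullet> x + b) / dual_norm N y \<ge> - K" if x: "x \<in> \<A>" for x
  proof -
    have "\<bar>y \<bullet> x\<bar> \<le> norm y * B"
      using Cauchy_Schwarz_ineq2[of y x] B[OF x] by (smt (verit) mult_left_mono norm_ge_zero)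
    hence "\<bar>lab x * (y \<bullet> x + b)\<bar> \<le> norm y * B + \<bar>b\<bar>" using lab x by auto
    hence "\<bar>lab x * (y \<bullet> x + b) / dual_norm N y\<bar> \<le> K" unfolding K_def
      by (simp add: abs_divide divide_right_mono)
    from abs_le_D2[OF this] show ?thesis by linarith
  qed
  hence bb: "bdd_below {lab A * (y \<bullet> A + b) / dual_norm N y | A. A \<in> \<A>}"
    unfolding bdd_below_def by blast
  have mem: "lab A * (y \<bullet> A + b) / dual_norm N y \<in> {lab A * (y \<bullet> A + b) / dual_norm N y | A. A \<in> \<A>}"
    using A by blast
  show ?thesis unfolding margin_def by (rule cInf_lower[OF mem bb])
qed

lemma hinge_step:
  fixes N :: "'a::euclidean_space \<Rightarrow> real"
  assumes n: "is_norm N" and sel: "is_selection N v" and c: "0 < c"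
    and bd: "bounded \<A>" and labs: "\<forall>A\<in>\<A>. lab A = 1 \<or> lab A = -1" and A: "A \<in> \<A>"
    and ys: "ystar \<noteq> 0" and ds: "dstar = margin N \<A> lab ystar bstar" and dp: "0 < dstar"
  shows "lab A * ((ystar /\<^sub>R (dstar * dual_norm N ystar), bstar / (dstar * dual_norm N ystar))
           \<bullet> (proxy N v c lab A y b, 1)) \<ge> 1 - 2 / (c * dstar)"
proof -
  define D where "D = dual_norm N ystar"
  have Dp: "D > 0" using dual_pos[OF n ys] D_def by simp
  obtain \<beta> where \<beta>: "\<bar>\<beta>\<bar> \<le> 2 / c" "proxy N v c lab A y b = A + \<beta> *\<^sub>R v y"
    using proxy_form[OF c] by blast
  have m: "dstar \<le> lab A * (ystar \<bullet> A + bstar) / D"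
    using margin_lower[OF bd labs A] ds D_def by simp
  hence m': "dstar * D \<le> lab A * (ystar \<bullet> A + bstar)" using Dp by (simp add: field_simps)
  have sv: "\<bar>ystar \<bullet> v y\<bar> \<le> D" using sel_dot[OF n sel] D_def by simp
  have l: "\<bar>lab A\<bar> = 1" using labs A by auto
  have "\<bar>\<beta>\<bar> * \<bar>ystar \<bullet> v y\<bar> \<le> 2 / c * D"
    using \<beta>(1) sv c by (intro mult_mono) auto
  hence "\<bar>lab A * \<beta> * (ystar \<bullet> v y)\<bar> \<le> 2 / c * D"
    using l by (simp add: abs_mult)
  hence e: "lab A * (ystar \<bullet> (A + \<beta> *\<^sub>R v y) + bstar) \<ge> dstar * D - 2 / c * D"
    using m' by (simp add: inner_add_right algebra_simps abs_le_iff)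
  have "lab A * ((ystar /\<^sub>R (dstar * D), bstar / (dstar * D)) \<bullet> (A + \<beta> *\<^sub>R v y, 1))
      = lab A * (ystar \<bullet> (A + \<beta> *\<^sub>R v y) + bstar) / (dstar * D)"
    using Dp dp by (simp add: inner_Pair field_simps)
  also have "\<dots> \<ge> (dstar * D - 2 / c * D) / (dstar * D)"
    using e Dp dp by (simp add: divide_right_mono)
  also have "(dstar * D - 2 / c * D) / (dstar * D) = 1 - 2 / (c * dstar)"
    using Dp dp c by (simp add: field_simps)
  finally show ?thesis using \<beta>(2) D_def by simp
qed


lemma norm_add_sq: "norm (a + b)^2 = norm a ^2 + 2 * (a \<bullet> b) + norm (b::'a::real_inner)^2"
  by (simp add: power2_norm_eq_inner inner_add_left inner_add_right inner_commute)

lemma final_arith: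
  fixes g k U R :: real
  assumes g: "g > 0" and k: "k \<ge> 0" and gk: "g * k \<le> a" and a: "a \<le> nu * nq"
    and nu: "nu \<ge> 0" and nq: "nq \<ge> 0" and nq2: "nq^2 \<le> R * k" and R: "R \<ge> 0"
  shows "k \<le> nu^2 * R / g^2"
proof (cases "k = 0")
  case True
  thus ?thesis using R by simp
next
  case False
  hence kp: "k > 0" using k by simp
  have "0 \<le> g * k" using g k by simp
  hence "(g * k)^2 \<le> (nu * nq)^2" using gk a by (intro power_mono) auto
  also have "\<dots> = nu^2 * nq^2" by (simp add: power_mult_distrib)
  also have "\<dots> \<le> nu^2 * (R * k)" using nq2 by (simp add: mult_left_mono)
  finally have "g^2 * k * k \<le> (nu^2 * R) * k" by (simp add: power2_eq_square algebra_simps)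
  hence "g^2 * k \<le> nu^2 * R" using kp by simp
  thus ?thesis using g by (simp add: field_simps)
qed

lemma alg_ident: fixes P R d D e :: real assumes "d \<noteq> 0"
  shows "P / (d * D)^2 * R / (e / d)^2 = P / D^2 * R / e^2"
  using assms by (simp add: power_divide power_mult_distrib)

theorem mainTheorem16:
  fixes N :: "'a::euclidean_space \<Rightarrow> real" and v :: "'a \<Rightarrow> 'a"
    and c :: real and lab :: "'a \<Rightarrow> real" and \<A> :: "'a set"
    and ystar :: 'a and bstar dstar :: real
    and Ag :: "nat \<Rightarrow> 'a" and T :: nat
  assumes norm: "is_norm N"
    and sel: "is_selection N v"
    and c_pos: "0 < c"
    and labels: "\<forall>A\<in>\<A>. lab A = 1 \<or> lab A = -1"
    and ystar_nz: "ystar \<noteq> 0"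
    and dstar_def: "dstar = margin N \<A> lab ystar bstar"
    and dstar_max: "\<forall>y b. y \<noteq> 0 \<longrightarrow> margin N \<A> lab y b \<le> dstar"
    and dstar_pos: "0 < dstar"
    and bounded: "bounded \<A>"
    and agents: "\<forall>t\<le>T. Ag t \<in> \<A>"
  shows "((\<Sum>t\<in>mistakes N v c lab UNIV 1 Ag T.
            hinge (ystar /\<^sub>R (dstar * dual_norm N ystar), bstar / (dstar * dual_norm N ystar))
                  (proxy N v c lab (Ag t) (fst (perceptron N v c lab UNIV 1 Ag t))
                                          (snd (perceptron N v c lab UNIV 1 Ag t)), 1)
                  (lab (Ag t)))
           \<le> 2 / (c * dstar) * real (card (mistakes N v c lab UNIV 1 Ag T))) \<and>
         (dstar > 2 / c \<longrightarrow>
           real (card (mistakes N v c lab UNIV 1 Ag T))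
             \<le> (norm ystar ^ 2 + bstar ^ 2) / dual_norm N ystar ^ 2
               * ((Sup (norm ` \<A>) + 2 / c * Sup (range (\<lambda>y. norm (v y)))) ^ 2 + 1)
               / (max 0 (dstar - 2 / c)) ^ 2)"
proof -
  define q where "q = perceptron N v c lab UNIV 1 Ag"
  define mis where "mis t = (pred_label N c (response N v c (Ag t) (fst (q t)) (snd (q t))) (fst (q t)) (snd (q t)) \<noteq> lab (Ag t))" for t
  define Mi where "Mi n = {t\<in>{0..<n}. mis t}" for n
  have Meq: "mistakes N v c lab UNIV 1 Ag T = Mi (Suc T)"
    by (auto simp: mistakes_def Mi_def mis_def q_def Let_def)
  define D where "D = dual_norm N ystar"
  define u where "u = (ystar /\<^sub>R (dstar * D), bstar / (dstar * D))"
  define xi where "xi t = (proxy N v c lab (Ag t) (fst (q t)) (snd (q t)), (1::real))" for t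
  have qS: "q (Suc t) = (if mis t then q t + lab (Ag t) *\<^sub>R xi t else q t)" for t
    by (simp add: q_def mis_def xi_def Let_def closest_point_self)
  have q0: "q 0 = 0" by (simp add: q_def zero_prod_def)
  have labt: "lab (Ag t) = 1 \<or> lab (Ag t) = -1" if "t \<le> T" for t
    using labels agents that by auto
  have hs: "lab (Ag t) * (u \<bullet> xi t) \<ge> 1 - 2 / (c * dstar)" if "t \<le> T" for t
    unfolding u_def xi_def D_def
    by (rule hinge_step[OF norm sel c_pos bounded labels _ ystar_nz dstar_def dstar_pos]) (use agents that in auto)
  have finM: "finite (Mi n)" for n by (simp add: Mi_def)
  have MiT: "t \<in> Mi (Suc T) \<Longrightarrow> t \<le> T" for t by (auto simp: Mi_def)
  have part1: "(\<Sum>t\<in>Mi (Suc T). hinge u (xi t) (lab (Ag t))) \<le> 2 / (c * dstar) * real (card (Mi (Suc T)))"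
  proof -
    have "hinge u (xi t) (lab (Ag t)) \<le> 2 / (c * dstar)" if "t \<in> Mi (Suc T)" for t
      using hs[OF MiT[OF that]] c_pos dstar_pos unfolding hinge_def by simp
    hence "(\<Sum>t\<in>Mi (Suc T). hinge u (xi t) (lab (Ag t))) \<le> (\<Sum>t\<in>Mi (Suc T). 2 / (c * dstar))"
      by (rule sum_mono)
    also have "\<dots> = 2 / (c * dstar) * real (card (Mi (Suc T)))" by simp
    finally show ?thesis .
  qed
  have part2: "real (card (Mi (Suc T)))
             \<le> (norm ystar ^ 2 + bstar ^ 2) / dual_norm N ystar ^ 2
               * ((Sup (norm ` \<A>) + 2 / c * Sup (range (\<lambda>y. norm (v y)))) ^ 2 + 1)
               / (max 0 (dstar - 2 / c)) ^ 2" if gt: "dstar > 2 / c"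
  proof -
    define g where "g = 1 - 2 / (c * dstar)"
    have gp: "g > 0" using gt c_pos dstar_pos unfolding g_def by (simp add: field_simps)
    define Rt where "Rt = Sup (norm ` \<A>) + 2 / c * Sup (range (\<lambda>y. norm (v y)))"
    define R where "R = Rt^2 + 1"
    have bA: "bdd_above (norm ` \<A>)" using bounded by (simp add: bounded_imp_bdd_above bounded_norm_comp)
    have bV: "bdd_above (range (\<lambda>y. norm (v y)))" by (rule sel_bound[OF norm sel])
    have xin: "norm (xi t)^2 \<le> R" if "t \<le> T" for t
    proof -
      obtain \<beta> where \<beta>: "\<bar>\<beta>\<bar> \<le> 2 / c" "proxy N v c lab (Ag t) (fst (q t)) (snd (q t)) = Ag t + \<beta> *\<^sub>R v (fst (q t))"
        using proxy_form[OF c_pos] by blast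
      have "norm (Ag t) \<le> Sup (norm ` \<A>)" using agents that bA by (intro cSup_upper) auto
      moreover have "norm (v (fst (q t))) \<le> Sup (range (\<lambda>y. norm (v y)))" using bV by (intro cSup_upper) auto
      moreover have "norm (Ag t + \<beta> *\<^sub>R v (fst (q t))) \<le> norm (Ag t) + \<bar>\<beta>\<bar> * norm (v (fst (q t)))"
        by (metis norm_scaleR norm_triangle_ineq)
      moreover have "\<bar>\<beta>\<bar> * norm (v (fst (q t))) \<le> 2 / c * Sup (range (\<lambda>y. norm (v y)))"
        using \<beta>(1) calculation(2) c_pos by (intro mult_mono) auto
      ultimately have "norm (Ag t + \<beta> *\<^sub>R v (fst (q t))) \<le> Rt" unfolding Rt_def by linarith
      hence "norm (Ag t + \<beta> *\<^sub>R v (fst (q t)))^2 \<le> Rt^2" by (intro power_mono) auto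
      thus ?thesis unfolding xi_def R_def using \<beta>(2) by (simp add: norm_Pair)
    qed
    have ind: "n \<le> Suc T \<Longrightarrow> g * card (Mi n) \<le> u \<bullet> q n \<and> norm (q n)^2 \<le> R * card (Mi n)" for n
    proof (induction n)
      case 0
      thus ?case by (simp add: q0 Mi_def)
    next
      case (Suc n)
      hence nT: "n \<le> T" by simp
      from Suc have IH: "g * card (Mi n) \<le> u \<bullet> q n" "norm (q n)^2 \<le> R * card (Mi n)" by auto
      show ?case
      proof (cases "mis n")
        case False
        have "Mi (Suc n) = Mi n" using False by (auto simp: Mi_def less_Suc_eq)
        thus ?thesis using IH qS[of n] False by simp
      next
        case True
        have MS: "Mi (Suc n) = insert n (Mi n)" using True by (auto simp: Mi_def)
        have nn: "n \<notin> Mi n" by (simp add: Mi_def)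
        have cM: "card (Mi (Suc n)) = Suc (card (Mi n))" using MS nn finM by simp
        have l2: "lab (Ag n) ^ 2 = 1" using labt[OF nT] by auto
        have ms: "lab (Ag n) * (q n \<bullet> xi n) \<le> 0"
          using mistake_step[of N v c lab "Ag n" "fst (q n)" "snd (q n)", OF norm sel c_pos labt[OF nT] True[unfolded mis_def]]
          by (cases "q n") (simp add: xi_def inner_Pair)
        have "u \<bullet> q (Suc n) = u \<bullet> q n + lab (Ag n) * (u \<bullet> xi n)"
          using True qS[of n] by (simp add: inner_add_right)
        moreover have "lab (Ag n) * (u \<bullet> xi n) \<ge> g" using hs[OF nT] unfolding g_def .
        moreover have "g * real (card (Mi (Suc n))) = g * card (Mi n) + g" using cM by (simp add: algebra_simps)
        ultimately have a1: "g * card (Mi (Suc n)) \<le> u \<bullet> q (Suc n)" using IH(1) by linarith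
        have "norm (q (Suc n))^2 = norm (q n)^2 + 2 * (lab (Ag n) * (q n \<bullet> xi n)) + norm (xi n)^2"
          using True qS[of n] l2 by (simp add: norm_add_sq power_mult_distrib)
        hence "norm (q (Suc n))^2 \<le> R * card (Mi n) + R" using IH(2) ms xin[OF nT] by linarith
        hence a2: "norm (q (Suc n))^2 \<le> R * card (Mi (Suc n))" using cM by (simp add: algebra_simps)
        show ?thesis using a1 a2 by simp
      qed
    qed
    have I: "g * card (Mi (Suc T)) \<le> u \<bullet> q (Suc T)" "norm (q (Suc T))^2 \<le> R * card (Mi (Suc T))"
      using ind[of "Suc T"] by auto
    have Dp: "D > 0" using dual_pos[OF norm ystar_nz] D_def by simp
    have k: "card (Mi (Suc T)) \<le> norm u ^2 * R / g^2"
      by (rule final_arith[OF gp _ I(1) norm_cauchy_schwarz _ _ I(2)]) (auto simp: R_def)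
    have nu: "norm u ^ 2 = (norm ystar ^ 2 + bstar ^ 2) / (dstar * D)^2"
      using Dp dstar_pos by (simp add: u_def norm_Pair power_divide power_mult_distrib field_simps)
    have "norm u ^2 * R / g^2 = (norm ystar ^ 2 + bstar ^ 2) / D ^ 2 * R / (max 0 (dstar - 2 / c)) ^ 2"
    proof -
      have mx: "max 0 (dstar - 2 / c) = dstar - 2 / c" using gt by simp
      have g': "g = (dstar - 2/c) / dstar" using dstar_pos c_pos unfolding g_def by (simp add: field_simps)
      show ?thesis unfolding nu mx g' using dstar_pos by (intro alg_ident) simp
    qed
    thus ?thesis using k unfolding R_def Rt_def D_def by simp
  qed
  show ?thesis
    unfolding Meq using part1 part2 by (simp add: q_def u_def xi_def D_def)
qed

end
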